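(* Let $M$ be a simple rank-$3$ matroid with nine elements whose ground set is the union of three long lines that share a common point. Then either $M$ has a $U_{2,5}$-minor, or $M\cong R_9$.
   Context: A point of a matroid is a rank-one flat; a line (rank-2 flat) is long if it contains at least three points. $R_9$ (the ternary Reid geometry) is the simple rank-$3$ matroid consisting of long lines $L_1,L_2,L_3$ with a common intersection point $x$ such that $|L_1|=|L_2|=4$, $|L_3|=3$, and both elements of $L_3-\{x\}$ lie on four long lines. *)

theory Defs
  imports Main
begin

definition matroid :: "'a set \<Rightarrow> 'a set set \<Rightarrow> bool" where
  "matroid E I \<longleftrightarrow> finite E \<and> (\<forall>X\<in>I. X \<subseteq> E) \<and> {} \<in> I
     \<and> (\<forall>X Y. X \<in> I \<and> Y \<subseteq> X \<longrightarrow> Y \<in> I)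
     \<and> (\<forall>X Y. X \<in> I \<and> Y \<in> I \<and> card X < card Y \<longrightarrow> (\<exists>e\<in>Y - X. insert e X \<in> I))"

definition rank_of :: "'a set set \<Rightarrow> 'a set \<Rightarrow> nat" where
  "rank_of I X = Max {card Y | Y. Y \<subseteq> X \<and> Y \<in> I}"

definition simple_matroid :: "'a set \<Rightarrow> 'a set set \<Rightarrow> bool" where
  "simple_matroid E I \<longleftrightarrow> (\<forall>X. X \<subseteq> E \<and> card X \<le> 2 \<longrightarrow> X \<in> I)"

definition flat :: "'a set \<Rightarrow> 'a set set \<Rightarrow> 'a set \<Rightarrow> bool" where
  "flat E I F \<longleftrightarrow> F \<subseteq> E \<and> (\<forall>e \<in> E - F. rank_of I (insert e F) > rank_of I F)"

definition point :: "'a set \<Rightarrow> 'a set set \<Rightarrow> 'a set \<Rightarrow> bool" where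
  "point E I P \<longleftrightarrow> flat E I P \<and> rank_of I P = 1"

definition line :: "'a set \<Rightarrow> 'a set set \<Rightarrow> 'a set \<Rightarrow> bool" where
  "line E I L \<longleftrightarrow> flat E I L \<and> rank_of I L = 2"

definition long_line :: "'a set \<Rightarrow> 'a set set \<Rightarrow> 'a set \<Rightarrow> bool" where
  "long_line E I L \<longleftrightarrow> line E I L \<and> card {P. point E I P \<and> P \<subseteq> L} \<ge> 3"

text \<open>Independent sets of the minor M / C \ D (C contracted, D deleted), on ground set E - (C \<union> D).\<close>
definition minor_indep :: "'a set \<Rightarrow> 'a set set \<Rightarrow> 'a set \<Rightarrow> 'a set \<Rightarrow> 'a set set" where
  "minor_indep E I C D =
     {X. X \<subseteq> E - (C \<union> D) \<and> rank_of I (X \<union> C) = card X + rank_of I C}"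

definition matroid_iso :: "'a set \<Rightarrow> 'a set set \<Rightarrow> 'b set \<Rightarrow> 'b set set \<Rightarrow> bool" where
  "matroid_iso E1 I1 E2 I2 \<longleftrightarrow>
     (\<exists>f. bij_betw f E1 E2 \<and> (\<forall>X. X \<subseteq> E1 \<longrightarrow> (X \<in> I1 \<longleftrightarrow> f ` X \<in> I2)))"

definition has_minor :: "'a set \<Rightarrow> 'a set set \<Rightarrow> 'b set \<Rightarrow> 'b set set \<Rightarrow> bool" where
  "has_minor E I E' I' \<longleftrightarrow>
     (\<exists>C D. C \<subseteq> E \<and> D \<subseteq> E \<and> C \<inter> D = {} \<and>
        matroid_iso (E - (C \<union> D)) (minor_indep E I C D) E' I')"

definition U_ground :: "nat \<Rightarrow> nat set" where
  "U_ground n = {0..<n}"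
definition U_indep :: "nat \<Rightarrow> nat \<Rightarrow> nat set set" where
  "U_indep r n = {X. X \<subseteq> {0..<n} \<and> card X \<le> r}"

text \<open>R_9: x = 0, L1 = {0,1,2,3}, L2 = {0,4,5,6}, L3 = {0,7,8}; the points 7 and 8 each lie on
  three further long lines, which are transversals of L1 - {0} and L2 - {0}.\<close>
definition R9_ground :: "nat set" where
  "R9_ground = {0..<9}"
definition R9_long_lines :: "nat set set" where
  "R9_long_lines = {{0,1,2,3}, {0,4,5,6}, {0,7,8},
                    {7,1,4}, {7,2,5}, {7,3,6},
                    {8,1,5}, {8,2,6}, {8,3,4}}"
definition R9_indep :: "nat set set" where
  "R9_indep = {X. X \<subseteq> R9_ground \<and>
      (card X \<le> 2 \<or> (card X = 3 \<and> \<not> (\<exists>L\<in>R9_long_lines. X \<subseteq> L)))}"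

end

theory Submission imports Defs begin

lemma prop_cases:
  assumes "ux \<or> uA \<or> uB \<or> uC" "vx \<or> vA \<or> vB \<or> vC" "wx \<or> wA \<or> wB \<or> wC"
  shows "((ux \<or> uA) \<and> (vx \<or> vA) \<or> (ux \<or> uA) \<and> (wx \<or> wA) \<or> (vx \<or> vA) \<and> (wx \<or> wA)) \<or>
         ((ux \<or> uB) \<and> (vx \<or> vB) \<or> (ux \<or> uB) \<and> (wx \<or> wB) \<or> (vx \<or> vB) \<and> (wx \<or> wB)) \<or>
         ((ux \<or> uC) \<and> (vx \<or> vC) \<or> (ux \<or> uC) \<and> (wx \<or> wC) \<or> (vx \<or> vC) \<and> (wx \<or> wC))
      \<or> (uC \<and> vA \<and> wB) \<or> (uC \<and> vB \<and> wA)
      \<or> (vC \<and> uA \<and> wB) \<or> (vC \<and> uB \<and> wA)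
      \<or> (wC \<and> uA \<and> vB) \<or> (wC \<and> uB \<and> vA)"
  using assms by argo

locale r3 =
  fixes E :: "'a set" and I :: "'a set set"
  assumes M: "matroid E I" and S: "simple_matroid E I" and R: "rank_of I E = 3"
begin

lemma finE: "finite E" using M unfolding matroid_def by (elim conjE) assumption
lemma indep_sub: "X \<in> I \<Longrightarrow> X \<subseteq> E" using M unfolding matroid_def by (elim conjE) (erule bspec)
lemma indep_empty: "{} \<in> I" using M unfolding matroid_def by (elim conjE) assumption
lemma indep_mono: "X \<in> I \<Longrightarrow> Y \<subseteq> X \<Longrightarrow> Y \<in> I" using M unfolding matroid_def by (elim conjE) simp
lemma indep_aug: "X \<in> I \<Longrightarrow> Y \<in> I \<Longrightarrow> card X < card Y \<Longrightarrow> \<exists>e\<in>Y - X. insert e X \<in> I"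
  using M unfolding matroid_def by (elim conjE) simp
lemma small_indep: "X \<subseteq> E \<Longrightarrow> card X \<le> 2 \<Longrightarrow> X \<in> I" using S unfolding simple_matroid_def by simp

lemma rank_fin: "finite X \<Longrightarrow> finite {card Y | Y. Y \<subseteq> X \<and> Y \<in> I}"
proof -
  assume "finite X"
  then have "finite (card ` Pow X)" by simp
  moreover have "{card Y | Y. Y \<subseteq> X \<and> Y \<in> I} \<subseteq> card ` Pow X" by auto
  ultimately show ?thesis using finite_subset by blast
qed

lemma rank_ge: "finite X \<Longrightarrow> Y \<subseteq> X \<Longrightarrow> Y \<in> I \<Longrightarrow> card Y \<le> rank_of I X"
proof -
  assume a: "finite X" "Y \<subseteq> X" "Y \<in> I"
  have "card Y \<in> {card Y | Y. Y \<subseteq> X \<and> Y \<in> I}" using a by blast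
  then show ?thesis unfolding rank_of_def using rank_fin[OF a(1)] by (rule Max_ge[rotated])
qed

lemma rank_obtain: "finite X \<Longrightarrow> \<exists>Y. Y \<subseteq> X \<and> Y \<in> I \<and> card Y = rank_of I X"
proof -
  assume f: "finite X"
  have "{card Y | Y. Y \<subseteq> X \<and> Y \<in> I} \<noteq> {}" using indep_empty by auto
  from Max_in[OF rank_fin[OF f] this] have "rank_of I X \<in> {card Y | Y. Y \<subseteq> X \<and> Y \<in> I}"
    unfolding rank_of_def .
  then obtain Y where Y: "rank_of I X = card Y" "Y \<subseteq> X" "Y \<in> I" by auto
  show ?thesis by (intro exI[of _ Y]) (simp add: Y)
qed

lemma indep_le3: "X \<in> I \<Longrightarrow> card X \<le> 3"
proof -
  assume "X \<in> I"
  then have "card X \<le> rank_of I E" by (rule rank_ge[OF finE indep_sub[OF \<open>X\<in>I\<close>]])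
  then show ?thesis using R by simp
qed

definition col :: "'a \<Rightarrow> 'a \<Rightarrow> 'a \<Rightarrow> bool" where
  "col u v w \<longleftrightarrow> u \<in> E \<and> v \<in> E \<and> w \<in> E \<and> {u,v,w} \<notin> I"

lemma col_distinct: "col u v w \<Longrightarrow> u \<noteq> v \<and> u \<noteq> w \<and> v \<noteq> w"
proof -
  assume c: "col u v w"
  have "card {u,v,w} \<le> 2" if "u = v \<or> u = w \<or> v = w" using that
  proof -
    have "card {v,w} \<le> 2" "card {u,w} \<le> 2" "card {u,v} \<le> 2"
      by (simp_all add: card_insert_if)
    then show ?thesis using that by (metis insert_absorb2 insert_commute insert_absorb)
  qed
  moreover have "{u,v,w} \<subseteq> E" "{u,v,w} \<notin> I" using c unfolding col_def by auto
  ultimately show ?thesis using small_indep by metis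
qed

lemma col_E: "col u v w \<Longrightarrow> u \<in> E \<and> v \<in> E \<and> w \<in> E" unfolding col_def by auto

lemma col_sym1: "col u v w \<Longrightarrow> col v u w" unfolding col_def by (simp add: insert_commute)
lemma col_sym2: "col u v w \<Longrightarrow> col u w v" unfolding col_def by (simp add: insert_commute)
lemma col_sym3: "col u v w \<Longrightarrow> col w v u" unfolding col_def by (simp add: insert_commute)
lemma col_sym4: "col u v w \<Longrightarrow> col v w u" unfolding col_def by (simp add: insert_commute)
lemma col_sym5: "col u v w \<Longrightarrow> col w u v" unfolding col_def by (simp add: insert_commute)

lemma col_trans: assumes "col p q r" "col p q s" "r \<noteq> s" shows "col p r s"
proof (rule ccontr)
  assume n: "\<not> col p r s"
  have d: "p \<noteq> q" "p \<noteq> r" "q \<noteq> r" "p \<noteq> s" "q \<noteq> s" using assms col_distinct by blast+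
  have E: "p \<in> E" "q \<in> E" "r \<in> E" "s \<in> E" using assms col_E by blast+
  have Y: "{p,r,s} \<in> I" using n E unfolding col_def by auto
  have X: "{p,q} \<in> I" using small_indep E by (auto simp: card_insert_if)
  have "card {p,q} < card {p,r,s}" using d assms(3) by simp
  then obtain e where e: "e \<in> {p,r,s} - {p,q}" "insert e {p,q} \<in> I" using indep_aug[OF X Y] by blast
  then have "e = r \<or> e = s" by auto
  moreover have "insert r {p,q} = {p,q,r}" "insert s {p,q} = {p,q,s}" by auto
  moreover have "{p,q,r} \<notin> I" "{p,q,s} \<notin> I" using assms(1,2) unfolding col_def by auto
  ultimately show False using e(2) by auto
qed

lemma col_trans2: assumes "col p q r" "col p q s" "r \<noteq> s" shows "col q r s"
  using col_trans[OF col_sym1[OF assms(1)] col_sym1[OF assms(2)] assms(3)] .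


lemma rank_le3: "finite X \<Longrightarrow> rank_of I X \<le> 3"
  using rank_obtain indep_le3 by metis

lemma rank_indep: "Y \<in> I \<Longrightarrow> rank_of I Y = card Y"
proof -
  assume Y: "Y \<in> I"
  have f: "finite Y" using Y indep_sub finE finite_subset by blast
  have "card Y \<le> rank_of I Y" using rank_ge[OF f _ Y] by simp
  moreover obtain Z where Z: "Z \<subseteq> Y" "card Z = rank_of I Y" using rank_obtain[OF f] by blast
  then have "rank_of I Y \<le> card Y" using card_mono[OF f Z(1)] by simp
  ultimately show ?thesis by simp
qed

definition isline :: "'a set \<Rightarrow> bool" where
  "isline L \<longleftrightarrow> L \<subseteq> E \<and> 3 \<le> card L
     \<and> (\<forall>u\<in>L. \<forall>v\<in>L. \<forall>w\<in>L. u \<noteq> v \<longrightarrow> u \<noteq> w \<longrightarrow> v \<noteq> w \<longrightarrow> col u v w)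
     \<and> (\<forall>p\<in>L. \<forall>q\<in>L. \<forall>e. p \<noteq> q \<longrightarrow> col p q e \<longrightarrow> e \<in> L)"

lemma point_single: assumes "point E I P" shows "\<exists>x. P = {x} \<and> x \<in> E"
proof -
  have PE: "P \<subseteq> E" and r: "rank_of I P = 1" using assms unfolding point_def flat_def by auto
  have f: "finite P" using PE finE finite_subset by blast
  obtain Y where Y: "Y \<subseteq> P" "Y \<in> I" "card Y = 1" using rank_obtain[OF f] r by metis
  then obtain x where x: "Y = {x}" using card_1_singletonE by blast
  have "P \<subseteq> {x}"
  proof
    fix y assume y: "y \<in> P"
    show "y \<in> {x}"
    proof (rule ccontr)
      assume "y \<notin> {x}"
      then have c: "card {x,y} = 2" by simp
      have s: "{x,y} \<subseteq> P" using y x Y by auto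
      then have "{x,y} \<in> I" using PE c by (intro small_indep) auto
      then have "2 \<le> rank_of I P" using rank_ge[OF f s] c by simp
      then show False using r by simp
    qed
  qed
  then have "P = {x}" using x Y by auto
  then show ?thesis using PE by auto
qed

lemma spread:
  assumes all: "\<forall>u\<in>L. \<forall>v\<in>L. \<forall>w\<in>L. u \<noteq> v \<longrightarrow> u \<noteq> w \<longrightarrow> v \<noteq> w \<longrightarrow> col u v w"
    and pq: "p \<in> L" "q \<in> L" "p \<noteq> q" and c: "col p q e" and e: "e \<notin> L"
    and uv: "u \<in> L" "v \<in> L" "u \<noteq> v"
  shows "col u v e"
proof -
  have A: "col p w e" if "w \<in> L" "w \<noteq> p" for w
  proof (cases "w = q")
    case True then show ?thesis using c by simp
  next
    case False
    then have "col p q w" using all pq that by simp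
    moreover have "w \<noteq> e" using that e by auto
    ultimately show ?thesis using col_trans[OF _ c] by simp
  qed
  show ?thesis
  proof (cases "u = p")
    case True then show ?thesis using A uv by simp
  next
    case F1: False
    show ?thesis
    proof (cases "v = p")
      case True
      have "col p u e" using A[of u] uv F1 by simp
      then show ?thesis using True col_sym1[OF \<open>col p u e\<close>] by simp
    next
      case False
      have 1: "col u p v" using all uv pq F1 False by simp
      have "col p u e" using A[of u] uv F1 by simp
      then have 2: "col u p e" by (rule col_sym1)
      have 3: "v \<noteq> e" using uv e by auto
      show ?thesis by (rule col_trans[OF 1 2 3])
    qed
  qed
qed

lemma long_line_isline: assumes "long_line E I L" shows "isline L"
proof -
  have LE: "L \<subseteq> E" and r: "rank_of I L = 2" and fl: "flat E I L"
    using assms unfolding long_line_def line_def flat_def by auto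
  have f: "finite L" using LE finE finite_subset by blast
  have all: "\<forall>u\<in>L. \<forall>v\<in>L. \<forall>w\<in>L. u \<noteq> v \<longrightarrow> u \<noteq> w \<longrightarrow> v \<noteq> w \<longrightarrow> col u v w"
  proof (intro ballI impI)
    fix u v w assume "u \<in> L" "v \<in> L" "w \<in> L" "u \<noteq> v" "u \<noteq> w" "v \<noteq> w"
    then have s: "{u,v,w} \<subseteq> L" and cd: "card {u,v,w} = 3" by auto
    have "{u,v,w} \<notin> I"
    proof
      assume "{u,v,w} \<in> I"
      then have "3 \<le> rank_of I L" using rank_ge[OF f s] cd by simp
      then show False using r by simp
    qed
    then show "col u v w" using s LE unfolding col_def by auto
  qed
  have cl: "\<forall>p\<in>L. \<forall>q\<in>L. \<forall>e. p \<noteq> q \<longrightarrow> col p q e \<longrightarrow> e \<in> L"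
  proof (intro ballI allI impI)
    fix p q e assume pq: "p \<in> L" "q \<in> L" "p \<noteq> q" and c: "col p q e"
    show "e \<in> L"
    proof (rule ccontr)
      assume e: "e \<notin> L"
      have eE: "e \<in> E" using c col_E by blast
      then have "rank_of I (insert e L) > 2" using fl e r unfolding flat_def by auto
      moreover have fi: "finite (insert e L)" using f by simp
      ultimately obtain Y where Y: "Y \<subseteq> insert e L" "Y \<in> I" "card Y > 2"
        using rank_obtain by metis
      have fY: "finite Y" using Y(1) fi by (rule finite_subset)
      have eY: "e \<in> Y"
      proof (rule ccontr)
        assume "e \<notin> Y"
        then have "Y \<subseteq> L" using Y by auto
        then have "card Y \<le> 2" using rank_ge[OF f _ Y(2)] r by simp
        then show False using Y by simp
      qed
      have "card (Y - {e}) \<ge> 2" using Y eY fY by simp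
      then obtain u v where uv: "u \<in> Y - {e}" "v \<in> Y - {e}" "u \<noteq> v"
        by (metis card_le_Suc_iff numeral_2_eq_2 insertCI)
      have uvL: "u \<in> L" "v \<in> L" using uv Y by auto
      have "{u,v,e} \<subseteq> Y" using uv eY by auto
      then have "{u,v,e} \<in> I" using indep_mono Y(2) by simp
      moreover have "col u v e" using spread[OF all pq c e uvL uv(3)] .
      ultimately show False unfolding col_def by simp
    qed
  qed
  have "{P. point E I P \<and> P \<subseteq> L} \<subseteq> (\<lambda>x. {x}) ` L"
  proof
    fix P assume "P \<in> {P. point E I P \<and> P \<subseteq> L}"
    then have "point E I P" "P \<subseteq> L" by auto
    then obtain x where "P = {x}" using point_single by blast
    then have "P = {x}" "x \<in> L" using \<open>P \<subseteq> L\<close> by auto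
    then show "P \<in> (\<lambda>x. {x}) ` L" by simp
  qed
  then have "card {P. point E I P \<and> P \<subseteq> L} \<le> card L"
    using card_mono[OF finite_imageI[OF f]] card_image_le[OF f, of "\<lambda>x. {x}"] by (meson le_trans)
  then have "3 \<le> card L" using assms unfolding long_line_def by simp
  then show ?thesis unfolding isline_def using LE all cl by meson
qed

lemma line_closed: "isline L \<Longrightarrow> p \<in> L \<Longrightarrow> q \<in> L \<Longrightarrow> p \<noteq> q \<Longrightarrow> col p q e \<Longrightarrow> e \<in> L"
  unfolding isline_def by meson

lemma line_col: "isline L \<Longrightarrow> u \<in> L \<Longrightarrow> v \<in> L \<Longrightarrow> w \<in> L \<Longrightarrow> u \<noteq> v \<Longrightarrow> u \<noteq> w \<Longrightarrow> v \<noteq> w \<Longrightarrow> col u v w"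
  unfolding isline_def by meson

lemma line_noncol: "isline L \<Longrightarrow> u \<in> L \<Longrightarrow> v \<in> L \<Longrightarrow> u \<noteq> v \<Longrightarrow> c \<notin> L \<Longrightarrow> \<not> col c u v"
proof
  assume "isline L" "u \<in> L" "v \<in> L" "u \<noteq> v" "c \<notin> L" "col c u v"
  from \<open>col c u v\<close> have "col u v c" by (rule col_sym4)
  then show False using line_closed \<open>isline L\<close> \<open>u \<in> L\<close> \<open>v \<in> L\<close> \<open>u \<noteq> v\<close> \<open>c \<notin> L\<close> by blast
qed

lemma lines_meet: assumes "isline L1" "isline L2" "L1 \<noteq> L2" "x \<in> L1" "x \<in> L2" "y \<in> L1" "y \<in> L2"
  shows "x = y"
proof (rule ccontr)
  assume xy: "x \<noteq> y"
  have "L1 \<subseteq> L2"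
  proof
    fix z assume z: "z \<in> L1"
    show "z \<in> L2"
    proof (cases "z = x \<or> z = y")
      case True then show ?thesis using assms by auto
    next
      case False
      then have "col x y z" using line_col[OF assms(1) assms(4) assms(6) z xy] by metis
      then show ?thesis by (rule line_closed[OF assms(2) assms(5) assms(7) xy])
    qed
  qed
  moreover have "L2 \<subseteq> L1"
  proof
    fix z assume z: "z \<in> L2"
    show "z \<in> L1"
    proof (cases "z = x \<or> z = y")
      case True then show ?thesis using assms by auto
    next
      case False
      then have "col x y z" using line_col[OF assms(2) assms(5) assms(7) z xy] by metis
      then show ?thesis by (rule line_closed[OF assms(1) assms(4) assms(6) xy])
    qed
  qed
  ultimately show False using assms by simp
qed


lemma minor_rank: assumes c: "c \<in> E" and R: "R \<subseteq> E" "c \<notin> R"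
    and nc: "\<forall>u\<in>R. \<forall>v\<in>R. u \<noteq> v \<longrightarrow> \<not> col c u v"
    and X: "X \<subseteq> R"
  shows "rank_of I (X \<union> {c}) = card X + 1 \<longleftrightarrow> card X \<le> 2"
proof -
  have fR: "finite R" using R finE finite_subset by blast
  have fX: "finite X" using X fR finite_subset by blast
  have cX: "c \<notin> X" using X R by auto
  have XcE: "X \<union> {c} \<subseteq> E" using X R c by auto
  have cardXc: "card (X \<union> {c}) = card X + 1" using fX cX by simp
  show ?thesis
  proof
    assume "rank_of I (X \<union> {c}) = card X + 1"
    moreover have "rank_of I (X \<union> {c}) \<le> 3" using rank_le3 fX by simp
    ultimately show "card X \<le> 2" by simp
  next
    assume le: "card X \<le> 2"
    have "X \<union> {c} \<in> I"
    proof (cases "card X = 2")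
      case True
      then obtain u v where uv: "X = {u,v}" "u \<noteq> v" by (auto simp: card_2_iff)
      then have "u \<in> R" "v \<in> R" using X by auto
      then have "\<not> col c u v" using nc uv(2) by simp
      moreover have "c \<in> E" "u \<in> E" "v \<in> E" using c R \<open>u \<in> R\<close> \<open>v \<in> R\<close> by auto
      ultimately have "{c,u,v} \<in> I" unfolding col_def by simp
      moreover have "X \<union> {c} = {c,u,v}" using uv by auto
      ultimately show ?thesis by simp
    next
      case False
      then have "card (X \<union> {c}) \<le> 2" using le cardXc by simp
      then show ?thesis using small_indep XcE by simp
    qed
    then show "rank_of I (X \<union> {c}) = card X + 1" using rank_indep cardXc by simp
  qed
qed

lemma U25:
  assumes c: "c \<in> E" and R: "R \<subseteq> E" "c \<notin> R" "card R = 5"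
    and nc: "\<forall>u\<in>R. \<forall>v\<in>R. u \<noteq> v \<longrightarrow> \<not> col c u v"
  shows "has_minor E I (U_ground 5) (U_indep 2 5)"
proof -
  have fR: "finite R" using R finE finite_subset by blast
  obtain h where h: "bij_betw h R {0..<(5::nat)}" using ex_bij_betw_finite_nat[OF fR] R(3) by metis
  define D where "D = E - R - {c}"
  have eq: "E - ({c} \<union> D) = R" using R unfolding D_def by auto
  have r1: "rank_of I {c} = 1"
  proof -
    have "{c} \<in> I" using small_indep c by simp
    then show ?thesis using rank_indep by simp
  qed
  have iso: "matroid_iso R (minor_indep E I {c} D) (U_ground 5) (U_indep 2 5)"
    unfolding matroid_iso_def
  proof (intro exI[of _ h] conjI allI impI)
    show "bij_betw h R (U_ground 5)" using h unfolding U_ground_def by simp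
  next
    fix X assume X: "X \<subseteq> R"
    have inj: "inj_on h X" using h X bij_betw_def inj_on_subset by metis
    have fX: "finite X" using X fR finite_subset by blast
    have img: "h ` X \<subseteq> {0..<5}" using h X bij_betw_def by (metis image_mono)
    have "X \<in> minor_indep E I {c} D \<longleftrightarrow> rank_of I (X \<union> {c}) = card X + 1"
      unfolding minor_indep_def using X eq r1 by auto
    also have "\<dots> \<longleftrightarrow> card X \<le> 2" using minor_rank[OF c R(1,2) nc X] .
    also have "\<dots> \<longleftrightarrow> h ` X \<in> U_indep 2 5" unfolding U_indep_def using img card_image[OF inj] by simp
    finally show "X \<in> minor_indep E I {c} D \<longleftrightarrow> h ` X \<in> U_indep 2 5" .
  qed
  show ?thesis unfolding has_minor_def
    apply (rule exI[of _ "{c}"], rule exI[of _ D])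
    using iso eq c unfolding D_def by auto
qed

lemma big_line: assumes L: "isline L" and c: "c \<in> E" "c \<notin> L" and card: "5 \<le> card L"
  shows "has_minor E I (U_ground 5) (U_indep 2 5)"
proof -
  obtain R where R: "R \<subseteq> L" "card R = 5" using obtain_subset_with_card_n[OF card] by metis
  have LE: "L \<subseteq> E" using L unfolding isline_def by simp
  have "\<forall>u\<in>R. \<forall>v\<in>R. u \<noteq> v \<longrightarrow> \<not> col c u v"
    using line_noncol[OF L] R c by blast
  then show ?thesis using U25[OF c(1) _ _ R(2)] R LE c by blast
qed

lemma fan: assumes L: "isline L" and "col c a u" "col c a v" "u \<noteq> v" "u \<in> L" "v \<in> L" "c \<notin> L"
  shows False
proof -
  have "col c u v" using col_trans[OF assms(2,3,4)] .
  then show False using line_noncol[OF L assms(5,6,4,7)] by simp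
qed


lemma col_set: assumes "{u,v,w} = {p,q,r}" shows "col u v w \<longleftrightarrow> col p q r"
proof -
  have "col u v w \<longleftrightarrow> {u,v,w} \<subseteq> E \<and> {u,v,w} \<notin> I" unfolding col_def by simp
  moreover have "col p q r \<longleftrightarrow> {p,q,r} \<subseteq> E \<and> {p,q,r} \<notin> I" unfolding col_def by simp
  ultimately show ?thesis using assms by simp
qed

lemma tri: assumes "{u,v,w} \<subseteq> {p,q,r}" "u \<noteq> v" "u \<noteq> w" "v \<noteq> w" "col p q r"
  shows "col u v w"
proof -
  have c3: "card {u,v,w} = 3" using assms by simp
  have "card {p,q,r} \<le> 3" by (simp add: card_insert_le_m1)
  moreover have "card {u,v,w} \<le> card {p,q,r}" using assms(1) by (simp add: card_mono)
  ultimately have "card {u,v,w} = card {p,q,r}" using c3 by simp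
  then have eq: "{u,v,w} = {p,q,r}" using card_subset_eq[OF _ assms(1)] by simp
  show ?thesis using col_set[OF eq] assms(5) by simp
qed

lemma two_in: assumes L: "isline L" and c: "col u v w"
  and m: "(u \<in> L \<and> v \<in> L) \<or> (u \<in> L \<and> w \<in> L) \<or> (v \<in> L \<and> w \<in> L)"
  shows "{u,v,w} \<subseteq> L"
proof -
  have d: "u \<noteq> v" "u \<noteq> w" "v \<noteq> w" using col_distinct[OF c] by auto
  have c2: "col u w v" using c by (rule col_sym2)
  have c4: "col v w u" using c by (rule col_sym4)
  show ?thesis
  proof (cases "u \<in> L \<and> v \<in> L")
    case True
    then have "w \<in> L" using line_closed[OF L _ _ d(1) c] by simp
    then show ?thesis using True by simp
  next
    case F: False
    show ?thesis
    proof (cases "u \<in> L \<and> w \<in> L")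
      case True
      then have "v \<in> L" using line_closed[OF L _ _ d(2) c2] by simp
      then show ?thesis using True by simp
    next
      case False
      then have "v \<in> L \<and> w \<in> L" using m F by blast
      then have "u \<in> L" using line_closed[OF L _ _ d(3) c4] by simp
      then show ?thesis using \<open>v \<in> L \<and> w \<in> L\<close> by simp
    qed
  qed
qed


lemma uniq_b: assumes L: "isline L" and "col c a b" "col c a b0" "b \<in> L" "b0 \<in> L" "c \<notin> L"
  shows "b = b0"
  using fan[OF L assms(2,3) _ assms(4,5,6)] by blast

lemma R9_char:
  assumes dist: "distinct [x,a1,a2,a3,b1,b2,b3,c1,c2]"
    and EE: "E = {x,a1,a2,a3,b1,b2,b3,c1,c2}"
    and L1: "isline {x,a1,a2,a3}" and L2: "isline {x,b1,b2,b3}" and L3: "isline {x,c1,c2}"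
    and t: "col c1 a1 b1" "col c1 a2 b2" "col c1 a3 b3" "col c2 a1 b2" "col c2 a2 b3" "col c2 a3 b1"
    and Ls: "Ls = {{x,a1,a2,a3},{x,b1,b2,b3},{x,c1,c2},{c1,a1,b1},{c1,a2,b2},{c1,a3,b3},
                   {c2,a1,b2},{c2,a2,b3},{c2,a3,b1}}"
    and uvw: "u \<in> E" "v \<in> E" "w \<in> E" "u \<noteq> v" "u \<noteq> w" "v \<noteq> w"
  shows "col u v w \<longleftrightarrow> (\<exists>L\<in>Ls. {u,v,w} \<subseteq> L)"
proof
  assume "\<exists>L\<in>Ls. {u,v,w} \<subseteq> L"
  then obtain L where L: "L \<in> Ls" "{u,v,w} \<subseteq> L" by blast
  have t0: "col x c1 c2" using line_col[OF L3] dist by simp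
  show "col u v w"
  proof -
    have "L = {x,a1,a2,a3} \<or> L = {x,b1,b2,b3} \<or> L = {x,c1,c2} \<or> L = {c1,a1,b1} \<or> L = {c1,a2,b2}
      \<or> L = {c1,a3,b3} \<or> L = {c2,a1,b2} \<or> L = {c2,a2,b3} \<or> L = {c2,a3,b1}" using L(1) Ls by simp
    then show ?thesis
    proof (elim disjE)
      assume "L = {x,a1,a2,a3}"
      then show ?thesis using line_col[OF L1] L(2) uvw by simp
    next
      assume "L = {x,b1,b2,b3}"
      then show ?thesis using line_col[OF L2] L(2) uvw by simp
    next
      assume "L = {x,c1,c2}"
      then show ?thesis using tri[OF _ uvw(4,5,6) t0] L(2) by simp
    next
      assume "L = {c1,a1,b1}"
      then show ?thesis using tri[OF _ uvw(4,5,6) t(1)] L(2) by simp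
    next
      assume "L = {c1,a2,b2}"
      then show ?thesis using tri[OF _ uvw(4,5,6) t(2)] L(2) by simp
    next
      assume "L = {c1,a3,b3}"
      then show ?thesis using tri[OF _ uvw(4,5,6) t(3)] L(2) by simp
    next
      assume "L = {c2,a1,b2}"
      then show ?thesis using tri[OF _ uvw(4,5,6) t(4)] L(2) by simp
    next
      assume "L = {c2,a2,b3}"
      then show ?thesis using tri[OF _ uvw(4,5,6) t(5)] L(2) by simp
    next
      assume "L = {c2,a3,b1}"
      then show ?thesis using tri[OF _ uvw(4,5,6) t(6)] L(2) by simp
    qed
  qed
next
  assume c: "col u v w"
  define A where "A = {a1,a2,a3}"
  define B where "B = {b1,b2,b3}"
  define C where "C = {c1,c2}"
  have L1': "isline (insert x A)" using L1 unfolding A_def by simp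
  have L2': "isline (insert x B)" using L2 unfolding B_def by simp
  have L3': "isline (insert x C)" using L3 unfolding C_def by simp
  have Ls1: "insert x A \<in> Ls" "insert x B \<in> Ls" "insert x C \<in> Ls"
    unfolding A_def B_def C_def Ls by simp_all
  have cnB: "c1 \<notin> insert x B" "c2 \<notin> insert x B" using dist unfolding B_def by auto
  have aux: "\<exists>L\<in>Ls. {p,q,r} \<subseteq> L" if cc: "col p q r" and pC: "p \<in> C" and qA: "q \<in> A" and rB: "r \<in> B"
    for p q r
  proof -
    have pnB: "p \<notin> insert x B" using pC cnB unfolding C_def by auto
    have w: "\<exists>L\<in>Ls. {p,q,r} \<subseteq> L" if r0: "col p q r0" "r0 \<in> B" "{p,q,r0} \<in> Ls" for r0
    proof -
      have "r = r0" using uniq_b[OF L2' cc r0(1) _ _ pnB] rB r0(2) by simp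
      then show ?thesis using r0(3) by blast
    qed
    have pc: "p = c1 \<or> p = c2" using pC unfolding C_def by simp
    have qa: "q = a1 \<or> q = a2 \<or> q = a3" using qA unfolding A_def by simp
    have m: "{c1,a1,b1} \<in> Ls" "{c1,a2,b2} \<in> Ls" "{c1,a3,b3} \<in> Ls"
      "{c2,a1,b2} \<in> Ls" "{c2,a2,b3} \<in> Ls" "{c2,a3,b1} \<in> Ls" unfolding Ls by simp_all
    have bB: "b1 \<in> B" "b2 \<in> B" "b3 \<in> B" unfolding B_def by simp_all
    show ?thesis using pc qa
    proof (elim disjE)
      assume "p = c1" "q = a1" then show ?thesis using w[OF _ bB(1)] t(1) m(1) by simp
    next
      assume "p = c1" "q = a2" then show ?thesis using w[OF _ bB(2)] t(2) m(2) by simp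
    next
      assume "p = c1" "q = a3" then show ?thesis using w[OF _ bB(3)] t(3) m(3) by simp
    next
      assume "p = c2" "q = a1" then show ?thesis using w[OF _ bB(2)] t(4) m(4) by simp
    next
      assume "p = c2" "q = a2" then show ?thesis using w[OF _ bB(3)] t(5) m(5) by simp
    next
      assume "p = c2" "q = a3" then show ?thesis using w[OF _ bB(1)] t(6) m(6) by simp
    qed
  qed
  have Eu: "u \<in> insert x (A \<union> B \<union> C)" "v \<in> insert x (A \<union> B \<union> C)" "w \<in> insert x (A \<union> B \<union> C)"
    using uvw EE unfolding A_def B_def C_def by auto
  have cases: "(\<exists>L\<in>{insert x A, insert x B, insert x C}.
        (u \<in> L \<and> v \<in> L) \<or> (u \<in> L \<and> w \<in> L) \<or> (v \<in> L \<and> w \<in> L))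
      \<or> (u \<in> C \<and> v \<in> A \<and> w \<in> B) \<or> (u \<in> C \<and> v \<in> B \<and> w \<in> A)
      \<or> (v \<in> C \<and> u \<in> A \<and> w \<in> B) \<or> (v \<in> C \<and> u \<in> B \<and> w \<in> A)
      \<or> (w \<in> C \<and> u \<in> A \<and> v \<in> B) \<or> (w \<in> C \<and> u \<in> B \<and> v \<in> A)"
  proof -
    have e: "u = x \<or> u \<in> A \<or> u \<in> B \<or> u \<in> C" "v = x \<or> v \<in> A \<or> v \<in> B \<or> v \<in> C"
      "w = x \<or> w \<in> A \<or> w \<in> B \<or> w \<in> C" using Eu by auto
    note p = prop_cases[OF e]
    show ?thesis using p by simp
  qed
  show "\<exists>L\<in>Ls. {u,v,w} \<subseteq> L"
  proof -
    have lines: "\<exists>L\<in>Ls. {u,v,w} \<subseteq> L" if "L \<in> {insert x A, insert x B, insert x C}"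
      "(u \<in> L \<and> v \<in> L) \<or> (u \<in> L \<and> w \<in> L) \<or> (v \<in> L \<and> w \<in> L)" for L
    proof -
      have "isline L" using that(1) L1' L2' L3' by blast
      then have "{u,v,w} \<subseteq> L" using two_in c that(2) by blast
      moreover have "L \<in> Ls" using that(1) Ls1 by blast
      ultimately show ?thesis by blast
    qed
    have s1: "{u,v,w} = {v,u,w}" "{u,v,w} = {w,u,v}" "{u,v,w} = {u,w,v}" "{u,v,w} = {v,w,u}"
       "{u,v,w} = {w,v,u}" by auto
    have cs: "col v u w" "col w u v" "col u w v" "col v w u" "col w v u"
      using c by (rule col_sym1, rule col_sym5, rule col_sym2, rule col_sym4, rule col_sym3)
    show ?thesis using cases
    proof (elim disjE)
      assume "\<exists>L\<in>{insert x A, insert x B, insert x C}.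
        (u \<in> L \<and> v \<in> L) \<or> (u \<in> L \<and> w \<in> L) \<or> (v \<in> L \<and> w \<in> L)"
      then show ?thesis using lines by blast
    next
      assume "u \<in> C \<and> v \<in> A \<and> w \<in> B" then show ?thesis using aux[OF c] by blast
    next
      assume "u \<in> C \<and> v \<in> B \<and> w \<in> A" then show ?thesis using aux[OF cs(3)] s1(3) by auto
    next
      assume "v \<in> C \<and> u \<in> A \<and> w \<in> B" then show ?thesis using aux[OF cs(1)] s1(1) by auto
    next
      assume "v \<in> C \<and> u \<in> B \<and> w \<in> A" then show ?thesis using aux[OF cs(4)] s1(4) by auto
    next
      assume "w \<in> C \<and> u \<in> A \<and> v \<in> B" then show ?thesis using aux[OF cs(2)] s1(2) by auto
    next
      assume "w \<in> C \<and> u \<in> B \<and> v \<in> A" then show ?thesis using aux[OF cs(5)] s1(5) by auto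
    qed
  qed
qed


lemma R9_indepchar:
  assumes dist: "distinct [x,a1,a2,a3,b1,b2,b3,c1,c2]"
    and EE: "E = {x,a1,a2,a3,b1,b2,b3,c1,c2}"
    and L1: "isline {x,a1,a2,a3}" and L2: "isline {x,b1,b2,b3}" and L3: "isline {x,c1,c2}"
    and t: "col c1 a1 b1" "col c1 a2 b2" "col c1 a3 b3" "col c2 a1 b2" "col c2 a2 b3" "col c2 a3 b1"
    and Ls: "Ls = {{x,a1,a2,a3},{x,b1,b2,b3},{x,c1,c2},{c1,a1,b1},{c1,a2,b2},{c1,a3,b3},
                   {c2,a1,b2},{c2,a2,b3},{c2,a3,b1}}"
    and Z: "Z \<subseteq> E"
  shows "Z \<in> I \<longleftrightarrow> card Z \<le> 2 \<or> (card Z = 3 \<and> \<not> (\<exists>L\<in>Ls. Z \<subseteq> L))"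
proof (cases "card Z \<le> 2")
  case True
  then show ?thesis using small_indep Z by simp
next
  case False
  show ?thesis
  proof (cases "card Z = 3")
    case True
    then obtain u v w where uvw: "Z = {u,v,w}" "u \<noteq> v" "v \<noteq> w" "u \<noteq> w"
      by (auto simp: card_3_iff)
    have inE: "u \<in> E" "v \<in> E" "w \<in> E" using Z uvw by auto
    have "Z \<in> I \<longleftrightarrow> \<not> col u v w" unfolding col_def using inE uvw(1) by simp
    also have "\<dots> \<longleftrightarrow> \<not> (\<exists>L\<in>Ls. {u,v,w} \<subseteq> L)"
      using R9_char[OF dist EE L1 L2 L3 t Ls inE uvw(2) uvw(4) uvw(3)] by simp
    finally show ?thesis using True uvw(1) by simp
  next
    case F2: False
    then have "card Z > 3" using False by simp
    then have "Z \<notin> I" using indep_le3 by force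
    then show ?thesis using False F2 by simp
  qed
qed

lemma R9_iso:
  assumes dist: "distinct [x,a1,a2,a3,b1,b2,b3,c1,c2]"
    and EE: "E = {x,a1,a2,a3,b1,b2,b3,c1,c2}"
    and L1: "isline {x,a1,a2,a3}" and L2: "isline {x,b1,b2,b3}" and L3: "isline {x,c1,c2}"
    and t: "col c1 a1 b1" "col c1 a2 b2" "col c1 a3 b3" "col c2 a1 b2" "col c2 a2 b3" "col c2 a3 b1"
  shows "matroid_iso E I R9_ground R9_indep"
proof -
  define Ls where "Ls = {{x,a1,a2,a3},{x,b1,b2,b3},{x,c1,c2},{c1,a1,b1},{c1,a2,b2},{c1,a3,b3},
                   {c2,a1,b2},{c2,a2,b3},{c2,a3,b1}}"
  define g :: "nat \<Rightarrow> 'a" where "g i = (if i = 0 then x else if i = 1 then a1 else if i = 2 then a2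
     else if i = 3 then a3 else if i = 4 then b1 else if i = 5 then b2 else if i = 6 then b3
     else if i = 7 then c1 else c2)" for i
  have G: "R9_ground = {0,1,2,3,4,5,6,7,8}" unfolding R9_ground_def by auto
  have gimg: "g ` R9_ground = E" unfolding G EE by (simp add: g_def insert_commute)
  have cE: "card E = 9" using dist EE by (simp add: card_insert_if)
  have cG: "card R9_ground = 9" unfolding R9_ground_def by simp
  have injg: "inj_on g R9_ground"
    by (rule eq_card_imp_inj_on) (simp_all add: G[symmetric] gimg cE cG, simp add: R9_ground_def)
  have bijg: "bij_betw g R9_ground E" using injg gimg unfolding bij_betw_def by simp
  have gLs: "(\<lambda>L. g ` L) ` R9_long_lines = Ls" unfolding R9_long_lines_def Ls_def by (simp add: g_def insert_commute)
  have R9L_sub: "\<forall>L\<in>R9_long_lines. L \<subseteq> R9_ground" unfolding R9_long_lines_def G by simp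
  have key: "g ` Y \<in> I \<longleftrightarrow> Y \<in> R9_indep" if Y: "Y \<subseteq> R9_ground" for Y
  proof -
    have injY: "inj_on g Y" using injg Y inj_on_subset by blast
    have cY: "card (g ` Y) = card Y" using card_image[OF injY] .
    have gYE: "g ` Y \<subseteq> E" using Y gimg by blast
    have sub: "g ` Y \<subseteq> g ` L \<longleftrightarrow> Y \<subseteq> L" if L: "L \<subseteq> R9_ground" for L
    proof
      assume "g ` Y \<subseteq> g ` L"
      show "Y \<subseteq> L"
      proof
        fix y assume y: "y \<in> Y"
        then have "g y \<in> g ` L" using \<open>g ` Y \<subseteq> g ` L\<close> by blast
        then obtain l where l: "l \<in> L" "g y = g l" by blast
        then have "y = l" using inj_onD[OF injg l(2)] y Y L by blast
        then show "y \<in> L" using l by simp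
      qed
    qed (rule image_mono)
    have "(\<exists>L\<in>Ls. g ` Y \<subseteq> L) \<longleftrightarrow> (\<exists>L\<in>R9_long_lines. g ` Y \<subseteq> g ` L)"
      unfolding gLs[symmetric] by simp
    also have "\<dots> \<longleftrightarrow> (\<exists>L\<in>R9_long_lines. Y \<subseteq> L)"
    proof (rule bex_cong[OF refl])
      fix L assume "L \<in> R9_long_lines"
      then have "L \<subseteq> R9_ground" using R9L_sub by blast
      then show "g ` Y \<subseteq> g ` L \<longleftrightarrow> Y \<subseteq> L" by (rule sub)
    qed
    finally have eqL: "(\<exists>L\<in>Ls. g ` Y \<subseteq> L) \<longleftrightarrow> (\<exists>L\<in>R9_long_lines. Y \<subseteq> L)" .
    show ?thesis using eqL
      using R9_indepchar[OF dist EE L1 L2 L3 t Ls_def gYE] cY Y unfolding R9_indep_def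
      by (simp add: R9_ground_def)
  qed
  define f where "f = inv_into R9_ground g"
  have bijf: "bij_betw f E R9_ground" unfolding f_def by (rule bij_betw_inv_into[OF bijg])
  show ?thesis unfolding matroid_iso_def
  proof (intro exI[of _ f] conjI allI impI)
    show "bij_betw f E R9_ground" by (rule bijf)
  next
    fix X assume X: "X \<subseteq> E"
    have fX: "f ` X \<subseteq> R9_ground" using bijf X bij_betw_imp_surj_on by blast
    have "g ` (f ` X) = X" unfolding f_def by (rule image_inv_into_cancel[OF gimg X])
    then show "X \<in> I \<longleftrightarrow> f ` X \<in> R9_indep" using key[OF fX] by simp
  qed
qed


lemma uniq_a: assumes L: "isline L" and "col c a b" "col c a' b" "a \<in> L" "a' \<in> L" "c \<notin> L"
  shows "a = a'"
proof (rule ccontr)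
  assume "a \<noteq> a'"
  moreover have "col c b a" using assms(2) by (rule col_sym2)
  moreover have "col c b a'" using assms(3) by (rule col_sym2)
  ultimately show False using fan[OF L] assms(4,5,6) by blast
qed

lemma partner:
  assumes L1: "isline L1" and L2: "isline L2" and x: "x \<in> L1" "x \<in> L2"
    and c: "c \<in> E" "c \<notin> L1" "c \<notin> L2"
    and A: "A = L1 - {x}" and B: "B = L2 - {x}" and cB: "card B = 3"
    and AB: "A \<inter> B = {}"
  shows "has_minor E I (U_ground 5) (U_indep 2 5) \<or> (\<forall>a\<in>A. \<exists>b\<in>B. col c a b)"
proof (cases "\<forall>a\<in>A. \<exists>b\<in>B. col c a b")
  case True then show ?thesis by simp
next
  case False
  then obtain a where a: "a \<in> A" "\<forall>b\<in>B. \<not> col c a b" by blast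
  define R where "R = insert x (insert a B)"
  have fB: "finite B" using cB card.infinite by fastforce
  have aB: "a \<notin> B" using a AB by blast
  have xB: "x \<notin> B" "x \<noteq> a" using B A a by auto
  have cR: "card R = 5" unfolding R_def using fB aB xB cB by simp
  have L1E: "L1 \<subseteq> E" and L2E: "L2 \<subseteq> E" using L1 L2 unfolding isline_def by simp_all
  have RE: "R \<subseteq> E" unfolding R_def using x A B a L1E L2E by blast
  have cnR: "c \<notin> R" unfolding R_def using c x A B a by blast
  have aL1: "a \<in> L1" using a A by blast
  have BL2: "B \<subseteq> L2" using B by blast
  have nc: "\<forall>u\<in>R. \<forall>v\<in>R. u \<noteq> v \<longrightarrow> \<not> col c u v"
  proof (intro ballI impI)
    fix u v assume u: "u \<in> R" and v: "v \<in> R" and uv: "u \<noteq> v"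
    show "\<not> col c u v"
    proof (cases "u = a")
      case True
      show ?thesis
      proof (cases "v = x")
        case True
        then show ?thesis using line_noncol[OF L1 aL1 x(1) _ c(2)] \<open>u = a\<close> xB by simp
      next
        case False
        then have "v \<in> B" using v uv \<open>u = a\<close> unfolding R_def by simp
        then show ?thesis using a(2) \<open>u = a\<close> by simp
      qed
    next
      case F1: False
      show ?thesis
      proof (cases "v = a")
        case True
        show ?thesis
        proof (cases "u = x")
          case True
          then show ?thesis using line_noncol[OF L1 x(1) aL1 _ c(2)] \<open>v = a\<close> xB by simp
        next
          case False
          then have "u \<in> B" using u F1 unfolding R_def by simp
          then have "\<not> col c a u" using a(2) by simp
          then show ?thesis using \<open>v = a\<close> col_sym2 by blast
        qed
      next
        case False
        then have "u \<in> L2" "v \<in> L2" using u v F1 x BL2 unfolding R_def by auto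
        then show ?thesis using line_noncol[OF L2 _ _ uv c(3)] by simp
      qed
    qed
  qed
  show ?thesis using U25[OF c(1) RE cnR cR nc] by simp
qed

lemma main:
  assumes L1: "isline L1" and L2: "isline L2" and L3: "isline L3"
    and x: "x \<in> L1" "x \<in> L2" "x \<in> L3"
    and i12: "L1 \<inter> L2 = {x}" and i13: "L1 \<inter> L3 = {x}" and i23: "L2 \<inter> L3 = {x}"
    and EE: "E = L1 \<union> L2 \<union> L3" and c3: "card L3 = 3" and s: "card L1 + card L2 = 8"
  shows "has_minor E I (U_ground 5) (U_indep 2 5) \<or> matroid_iso E I R9_ground R9_indep"
proof -
  have L1E: "L1 \<subseteq> E" and L2E: "L2 \<subseteq> E" and L3E: "L3 \<subseteq> E"
    using L1 L2 L3 unfolding isline_def by simp_all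
  have fL3: "finite L3" using L3E finE finite_subset by blast
  have "card (L3 - {x}) = 2" using c3 x(3) fL3 by simp
  then obtain c1 c2 where cc: "L3 - {x} = {c1,c2}" "c1 \<noteq> c2" by (auto simp: card_2_iff)
  have L3eq: "L3 = {x,c1,c2}" using cc x(3) by blast
  have cx: "c1 \<noteq> x" "c2 \<noteq> x" using cc by blast+
  have c1n: "c1 \<notin> L1" "c1 \<notin> L2" "c2 \<notin> L1" "c2 \<notin> L2" using i13 i23 L3eq cx by blast+
  have cE: "c1 \<in> E" "c2 \<in> E" using L3E L3eq by auto
  show ?thesis
  proof (cases "5 \<le> card L1 \<or> 5 \<le> card L2")
    case True
    then show ?thesis using big_line[OF L1 cE(1) c1n(1)] big_line[OF L2 cE(1) c1n(2)] by blast
  next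
    case False
    have "3 \<le> card L1" "3 \<le> card L2" using L1 L2 unfolding isline_def by simp_all
    then have c4: "card L1 = 4" "card L2 = 4" using False s by simp_all
    define A where "A = L1 - {x}"
    define B where "B = L2 - {x}"
    have fL1: "finite L1" "finite L2" using L1E L2E finE finite_subset by blast+
    have cA: "card A = 3" "card B = 3" unfolding A_def B_def using c4 fL1 x by simp_all
    have AB: "A \<inter> B = {}" using i12 unfolding A_def B_def by blast
    have P1: "has_minor E I (U_ground 5) (U_indep 2 5) \<or> (\<forall>a\<in>A. \<exists>b\<in>B. col c1 a b)"
      using partner[OF L1 L2 x(1,2) cE(1) c1n(1,2) A_def B_def cA(2) AB] .
    have P2: "has_minor E I (U_ground 5) (U_indep 2 5) \<or> (\<forall>a\<in>A. \<exists>b\<in>B. col c2 a b)"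
      using partner[OF L1 L2 x(1,2) cE(2) c1n(3,4) A_def B_def cA(2) AB] .
    show ?thesis
    proof (cases "has_minor E I (U_ground 5) (U_indep 2 5)")
      case True then show ?thesis by simp
    next
      case False
      then have m1: "\<forall>a\<in>A. \<exists>b\<in>B. col c1 a b" and m2: "\<forall>a\<in>A. \<exists>b\<in>B. col c2 a b"
        using P1 P2 by simp_all
      obtain a1 a2 a3 where aa: "A = {a1,a2,a3}" "a1 \<noteq> a2" "a2 \<noteq> a3" "a1 \<noteq> a3"
        using cA(1) by (auto simp: card_3_iff)
      have aA: "a1 \<in> A" "a2 \<in> A" "a3 \<in> A" using aa by simp_all
      obtain b1 b2 b3 where bb: "b1 \<in> B" "b2 \<in> B" "b3 \<in> B"
        "col c1 a1 b1" "col c1 a2 b2" "col c1 a3 b3" using m1 aA by meson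
      obtain d1 d2 d3 where dd: "d1 \<in> B" "d2 \<in> B" "d3 \<in> B"
        "col c2 a1 d1" "col c2 a2 d2" "col c2 a3 d3" using m2 aA by meson
      have aL1: "a1 \<in> L1" "a2 \<in> L1" "a3 \<in> L1" using aA unfolding A_def by simp_all
      have bL2: "\<And>b. b \<in> B \<Longrightarrow> b \<in> L2" unfolding B_def by simp
      have bd: "b1 \<noteq> b2" "b2 \<noteq> b3" "b1 \<noteq> b3"
        using uniq_a[OF L1 bb(4) _ aL1(1) aL1(2) c1n(1)] uniq_a[OF L1 bb(5) _ aL1(2) aL1(3) c1n(1)]
          uniq_a[OF L1 bb(4) _ aL1(1) aL1(3) c1n(1)] aa bb by auto
      have dd': "d1 \<noteq> d2" "d2 \<noteq> d3" "d1 \<noteq> d3"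
        using uniq_a[OF L1 dd(4) _ aL1(1) aL1(2) c1n(3)] uniq_a[OF L1 dd(5) _ aL1(2) aL1(3) c1n(3)]
          uniq_a[OF L1 dd(4) _ aL1(1) aL1(3) c1n(3)] aa dd by auto
      have Beq: "B = {b1,b2,b3}"
      proof -
        have "{b1,b2,b3} \<subseteq> B" using bb by simp
        moreover have "card {b1,b2,b3} = 3" using bd by simp
        moreover have "finite B" using fL1 unfolding B_def by simp
        ultimately show ?thesis using card_subset_eq cA(2) by metis
      qed
      have nodiag: False if "col c1 a b" "col c2 a b" "a \<in> A" for a b
      proof -
        have "col a b c1" using that(1) by (rule col_sym4)
        moreover have "col a b c2" using that(2) by (rule col_sym4)
        ultimately have "col a c1 c2" using col_trans cc(2) by blast
        then have "col c1 c2 a" by (rule col_sym4)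
        then have "a \<in> L3" using line_closed[OF L3 _ _ cc(2)] L3eq by simp
        then show False using that(3) i13 unfolding A_def by blast
      qed
      have dn: "d1 \<noteq> b1" "d2 \<noteq> b2" "d3 \<noteq> b3"
        using nodiag[OF bb(4) _ aA(1)] nodiag[OF bb(5) _ aA(2)] nodiag[OF bb(6) _ aA(3)] dd by auto
      have dB: "d1 = b1 \<or> d1 = b2 \<or> d1 = b3" "d2 = b1 \<or> d2 = b2 \<or> d2 = b3" "d3 = b1 \<or> d3 = b2 \<or> d3 = b3"
        using dd(1-3) Beq by simp_all
      have L1eq: "L1 = {x,a1,a2,a3}" using aa(1) x(1) unfolding A_def by blast
      have L2eq: "L2 = {x,b1,b2,b3}" using Beq x(2) unfolding B_def by blast
      have EE': "E = {x,a1,a2,a3,b1,b2,b3,c1,c2}" using EE L1eq L2eq L3eq by auto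
      have xa: "x \<notin> A" "x \<notin> B" unfolding A_def B_def by simp_all
      have dist: "distinct [x,a1,a2,a3,b1,b2,b3,c1,c2]"
        using aa bd cc(2) cx xa AB aA bb(1-3) c1n L1eq L2eq by auto
      have dist2: "distinct [x,a1,a3,a2,b1,b3,b2,c1,c2]" using dist by auto
      show ?thesis
      proof (cases "d1 = b2")
        case True
        then have "d3 = b1" "d2 = b3" using dB dn dd' by auto
        then have t: "col c2 a1 b2" "col c2 a2 b3" "col c2 a3 b1" using dd True by simp_all
        have "matroid_iso E I R9_ground R9_indep"
          using R9_iso[OF dist EE' L1[unfolded L1eq] L2[unfolded L2eq] L3[unfolded L3eq] bb(4-6) t] .
        then show ?thesis by simp
      next
        case False
        then have "d1 = b3" "d2 = b1" "d3 = b2" using dB dn dd' by auto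
        then have t: "col c2 a1 b3" "col c2 a3 b2" "col c2 a2 b1" using dd by simp_all
        have E2: "E = {x,a1,a3,a2,b1,b3,b2,c1,c2}" using EE' by auto
        have l1: "isline {x,a1,a3,a2}" using L1 L1eq by (simp add: insert_commute)
        have l2: "isline {x,b1,b3,b2}" using L2 L2eq by (simp add: insert_commute)
        have "matroid_iso E I R9_ground R9_indep"
          using R9_iso[OF dist2 E2 l1 l2 L3[unfolded L3eq] bb(4) bb(6) bb(5) t] .
        then show ?thesis by simp
      qed
    qed
  qed
qed


lemma card3: assumes f: "finite L1" "finite L2" "finite L3"
  and i12: "L1 \<inter> L2 = {x}" and i13: "L1 \<inter> L3 = {x}" and i23: "L2 \<inter> L3 = {x}"
  shows "card (L1 \<union> L2 \<union> L3) + 2 = card L1 + card L2 + card L3"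
proof -
  have "card L1 + card L2 = card (L1 \<union> L2) + card (L1 \<inter> L2)" using card_Un_Int f by blast
  then have a: "card L1 + card L2 = card (L1 \<union> L2) + 1" using i12 by simp
  have "(L1 \<union> L2) \<inter> L3 = {x}" using i13 i23 by blast
  moreover have "card (L1 \<union> L2) + card L3 = card (L1 \<union> L2 \<union> L3) + card ((L1 \<union> L2) \<inter> L3)"
    using card_Un_Int f by (meson finite_UnI)
  ultimately have "card (L1 \<union> L2) + card L3 = card (L1 \<union> L2 \<union> L3) + 1" by simp
  then show ?thesis using a by simp
qed

end

theorem lemma5p1:
  fixes E :: "'a set" and I :: "'a set set"
  assumes "matroid E I"
    and "simple_matroid E I"
    and "rank_of I E = 3"
    and "card E = 9"
    and "\<exists>L1 L2 L3 P. long_line E I L1 \<and> long_line E I L2 \<and> long_line E I L3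
           \<and> L1 \<noteq> L2 \<and> L1 \<noteq> L3 \<and> L2 \<noteq> L3
           \<and> point E I P \<and> P \<subseteq> L1 \<inter> L2 \<inter> L3
           \<and> E = L1 \<union> L2 \<union> L3"
  shows "has_minor E I (U_ground 5) (U_indep 2 5) \<or> matroid_iso E I R9_ground R9_indep"
proof -
  interpret r3 E I using assms(1-3) by unfold_locales
  obtain L1 L2 L3 P where H: "long_line E I L1" "long_line E I L2" "long_line E I L3"
    "L1 \<noteq> L2" "L1 \<noteq> L3" "L2 \<noteq> L3" "point E I P" "P \<subseteq> L1 \<inter> L2 \<inter> L3" "E = L1 \<union> L2 \<union> L3"
    using assms(5) by blast
  have l: "isline L1" "isline L2" "isline L3" using long_line_isline H(1-3) by simp_all
  obtain x where "P = {x}" using point_single[OF H(7)] by blast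
  then have x: "x \<in> L1" "x \<in> L2" "x \<in> L3" using H(8) by auto
  have i12: "L1 \<inter> L2 = {x}" using lines_meet[OF l(1) l(2) H(4)] x by blast
  have i13: "L1 \<inter> L3 = {x}" using lines_meet[OF l(1) l(3) H(5)] x by blast
  have i23: "L2 \<inter> L3 = {x}" using lines_meet[OF l(2) l(3) H(6)] x by blast
  have LE: "L1 \<subseteq> E" "L2 \<subseteq> E" "L3 \<subseteq> E" using l unfolding isline_def by simp_all
  have f: "finite L1" "finite L2" "finite L3" using LE finE finite_subset by blast+
  have c3: "3 \<le> card L1" "3 \<le> card L2" "3 \<le> card L3" using l unfolding isline_def by simp_all
  have sum: "card L1 + card L2 + card L3 = 11"
    using card3[OF f i12 i13 i23] H(9) assms(4) by simp
  show ?thesis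
  proof (cases "card L3 = 3")
    case True
    then show ?thesis using main[OF l(1) l(2) l(3) x i12 i13 i23 H(9) True] sum by simp
  next
    case F3: False
    show ?thesis
    proof (cases "card L2 = 3")
      case True
      have EE: "E = L1 \<union> L3 \<union> L2" using H(9) by blast
      show ?thesis using main[OF l(1) l(3) l(2) x(1) x(3) x(2) i13 i12 _ EE True] i23 sum True
        by (simp add: Int_commute)
    next
      case False
      then have c1: "card L1 = 3" using F3 sum c3 by simp
      have EE: "E = L2 \<union> L3 \<union> L1" using H(9) by blast
      show ?thesis using main[OF l(2) l(3) l(1) x(2) x(3) x(1) i23 _ _ EE c1] i12 i13 sum c1
        by (simp add: Int_commute)
    qed
  qed
qed

end
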